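(* Let $\mathcal P\subset\mathbb R^n$ be an $n$-dimensional convex polytope and consider $\dot x=Ax+a+Bu$, $x\in\mathcal P$, with $A\in\mathbb R^{n\times n}$, $a\in\mathbb R^n$, $B\in\mathbb R^{n\times m}$, under (A1) $\operatorname{rank}(B)=n-1$; (A2) $(A,B)$ controllable; (A3) $\operatorname{int}\mathcal P\cap\mathcal O=\emptyset$; (A4) $\mathcal F$ is an $(n-1)$-dimensional polytope in the boundary of $\mathcal P$. Suppose there exists a vertex $v_*$ of $\mathcal F$ with $v_*\in\mathcal F\cap\mathcal P^+$. Let $\tilde{\mathcal P}\subset\mathcal P$ be an $n$-dimensional polytope such that $\mathcal F$ is a facet of $\tilde{\mathcal P}$. Then $\mathcal P\xrightarrow{\mathcal P}\mathcal F$ implies $\tilde{\mathcal P}\xrightarrow{\tilde{\mathcal P}}\mathcal F$.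
   Context: $\mathcal B=\operatorname{Im}(B)$, $\mathcal O=\{x:Ax+a\in\mathcal B\}$; $\beta$ is the unit normal to $\mathcal B$ with $\beta^T(Ax+a)\le0$ for all $x\in\mathcal P$; $\mathcal P^+=\arg\max\{\beta^Tx:x\in\mathcal P\}$. For closed sets $\Omega,\Omega_f$, $\Omega\xrightarrow{\Omega}\Omega_f$ means: for every $x\in\Omega$ there exist a piecewise continuous control $u$ and $T\ge0$ such that the solution $\phi^u_t(x)$ satisfies $\phi^u_T(x)\in\Omega_f$ and $\phi^u_t(x)\in\Omega$ for all $t\in[0,T]$. *)

theory Defs
  imports "HOL-Analysis.Analysis"
begin

(* Kalman rank condition: rank [B, AB, ..., A^(n-1) B] = n, i.e. the columns of
   A^k B (k < n) span R^n. *)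
definition controllable :: "real^'n^'n \<Rightarrow> real^'m^'n \<Rightarrow> bool" where
  "controllable A B \<longleftrightarrow>
     span (\<Union>k\<in>{..<CARD('n)}. columns ((((**) A) ^^ k) B)) = UNIV"

(* piecewise continuous on [a,b]: finitely many discontinuity points, at which the
   one-sided limits exist *)
definition piecewise_continuous_on :: "real \<Rightarrow> real \<Rightarrow> (real \<Rightarrow> 'a::real_normed_vector) \<Rightarrow> bool" where
  "piecewise_continuous_on a b u \<longleftrightarrow>
     (\<exists>S. finite S \<and> continuous_on ({a..b} - S) u \<and>
          (\<forall>s\<in>S. (\<exists>l. (u \<longlongrightarrow> l) (at_left s)) \<and> (\<exists>l. (u \<longlongrightarrow> l) (at_right s))))"

(* x is the (Caratheodory) solution on [0,T] of  x' = A x + a + B u(t), x(0) = x0 *)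
definition is_solution ::
  "real^'n^'n \<Rightarrow> real^'n \<Rightarrow> real^'m^'n \<Rightarrow> (real \<Rightarrow> real^'m) \<Rightarrow> real^'n \<Rightarrow> real \<Rightarrow> (real \<Rightarrow> real^'n) \<Rightarrow> bool" where
  "is_solution A a B u x0 T x \<longleftrightarrow>
     continuous_on {0..T} x \<and>
     (\<forall>t\<in>{0..T}. x t = x0 + integral {0..t} (\<lambda>s. A *v x s + a + B *v u s))"

(* Omega --Omega--> Omega_f *)
definition reach ::
  "real^'n^'n \<Rightarrow> real^'n \<Rightarrow> real^'m^'n \<Rightarrow> (real^'n) set \<Rightarrow> (real^'n) set \<Rightarrow> bool" where
  "reach A a B \<Omega> \<Omega>f \<longleftrightarrow>
     (\<forall>x0\<in>\<Omega>. \<exists>u T x. T \<ge> 0 \<and> piecewise_continuous_on 0 T u \<and>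
        is_solution A a B u x0 T x \<and> x T \<in> \<Omega>f \<and> (\<forall>t\<in>{0..T}. x t \<in> \<Omega>))"

definition ImB :: "real^'m^'n \<Rightarrow> (real^'n) set" where
  "ImB B = range (\<lambda>u. B *v u)"

definition obs_set :: "real^'n^'n \<Rightarrow> real^'n \<Rightarrow> real^'m^'n \<Rightarrow> (real^'n) set" where
  "obs_set A a B = {x. A *v x + a \<in> ImB B}"

definition Pplus :: "real^'n \<Rightarrow> (real^'n) set \<Rightarrow> (real^'n) set" where
  "Pplus \<beta> P = {x \<in> P. \<forall>y\<in>P. \<beta> \<bullet> y \<le> \<beta> \<bullet> x}"

end

theory Submission
  imports Defs
begin

lemma quad_traj:
  fixes A :: "real^'n^'n" and a :: "real^'n" and B :: "real^'m^'n"
    and \<beta> x0 P Q :: "real^'n" and S Ff :: "(real^'n) set"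
  assumes ImB: "\<And>w. \<beta> \<bullet> w = 0 \<Longrightarrow> \<exists>u. B *v u = w"
    and T: "T \<ge> 0"
    and c1: "\<beta> \<bullet> P = \<beta> \<bullet> (A *v x0 + a)"
    and c2: "2 * (\<beta> \<bullet> Q) = \<beta> \<bullet> (A *v P)"
    and c3: "\<beta> \<bullet> (A *v Q) = 0"
    and inS: "\<And>t. t \<in> {0..T} \<Longrightarrow> x0 + t *\<^sub>R P + t^2 *\<^sub>R Q \<in> S"
    and fin: "x0 + T *\<^sub>R P + T^2 *\<^sub>R Q \<in> Ff"
  shows "\<exists>u T x. T \<ge> 0 \<and> piecewise_continuous_on 0 T u \<and> is_solution A a B u x0 T x
           \<and> x T \<in> Ff \<and> (\<forall>t\<in>{0..T}. x t \<in> S)"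
proof -
  define w0 where "w0 = P - A *v x0 - a"
  define w1 where "w1 = 2 *\<^sub>R Q - A *v P"
  define w2 where "w2 = - (A *v Q)"
  have "\<beta> \<bullet> w0 = 0" using c1 by (simp add: w0_def inner_diff_right inner_add_right)
  then obtain u0 where u0: "B *v u0 = w0" using ImB by blast
  have "\<beta> \<bullet> w1 = 0" using c2 by (simp add: w1_def inner_diff_right)
  then obtain u1 where u1: "B *v u1 = w1" using ImB by blast
  have "\<beta> \<bullet> w2 = 0" using c3 by (simp add: w2_def)
  then obtain u2 where u2: "B *v u2 = w2" using ImB by blast
  define u where "u = (\<lambda>t::real. u0 + t *\<^sub>R u1 + t^2 *\<^sub>R u2)"
  define x where "x = (\<lambda>t::real. x0 + t *\<^sub>R P + t^2 *\<^sub>R Q)"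
  have integrand: "A *v x s + a + B *v u s = P + (2 * s) *\<^sub>R Q" for s
    unfolding x_def u_def
    by (simp add: matrix_vector_right_distrib matrix_vector_mult_scaleR u0 u1 u2 w0_def w1_def w2_def
        algebra_simps power2_eq_square)
  have deriv: "((\<lambda>s. s *\<^sub>R P + s^2 *\<^sub>R Q) has_vector_derivative (P + (2 * s) *\<^sub>R Q)) (at s within X)" for s X
    by (auto intro!: derivative_eq_intros simp: algebra_simps)
  have sol: "is_solution A a B u x0 T x"
    unfolding is_solution_def
  proof
    show "continuous_on {0..T} x" unfolding x_def by (intro continuous_intros)
    show "\<forall>t\<in>{0..T}. x t = x0 + integral {0..t} (\<lambda>s. A *v x s + a + B *v u s)"
    proof
      fix t assume "t \<in> {0..T}"
      then have "t \<ge> 0" by simp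
      have "((\<lambda>s. P + (2 * s) *\<^sub>R Q) has_integral ((t *\<^sub>R P + t^2 *\<^sub>R Q) - (0 *\<^sub>R P + 0^2 *\<^sub>R Q))) {0..t}"
        by (rule fundamental_theorem_of_calculus[OF \<open>t \<ge> 0\<close>]) (rule deriv)
      then have "integral {0..t} (\<lambda>s. A *v x s + a + B *v u s) = t *\<^sub>R P + t^2 *\<^sub>R Q"
        by (simp add: integrand integral_unique)
      then show "x t = x0 + integral {0..t} (\<lambda>s. A *v x s + a + B *v u s)"
        by (simp add: x_def)
    qed
  qed
  have pc: "piecewise_continuous_on 0 T u"
    unfolding piecewise_continuous_on_def u_def
    by (rule exI[of _ "{}"]) (auto intro!: continuous_intros)
  show ?thesis
    using T pc sol fin inS by (intro exI[of _ u] exI[of _ T] exI[of _ x]) (auto simp: x_def)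
qed

lemma convex4:
  fixes S :: "'a::real_vector set"
  assumes "convex S" "p \<in> S" "q \<in> S" "r \<in> S" "s \<in> S"
    and "0 \<le> a" "0 \<le> b" "0 \<le> c" "0 \<le> d" "a + b + c + d = 1"
  shows "a *\<^sub>R p + b *\<^sub>R q + c *\<^sub>R r + d *\<^sub>R s \<in> S"
proof -
  have "(\<Sum>j\<in>{0::nat,1,2,3}. ([a,b,c,d]!j) *\<^sub>R ([p,q,r,s]!j)) \<in> S"
    by (rule convex_sum) (use assms in \<open>auto simp: less_Suc_eq\<close>)
  then show ?thesis by (simp add: algebra_simps)
qed

lemma bary_traj:
  fixes A :: "real^'n^'n" and a :: "real^'n" and B :: "real^'m^'n"
    and \<beta> x0 z1 z2 z3 :: "real^'n" and S Ff :: "(real^'n) set"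
  assumes ImB: "\<And>w. \<beta> \<bullet> w = 0 \<Longrightarrow> \<exists>u. B *v u = w"
    and S: "convex S" "x0 \<in> S" "Ff \<subseteq> S" and Ff: "convex Ff" "z1 \<in> Ff" "z2 \<in> Ff" "z3 \<in> Ff"
    and T: "T > 0"
    and pos: "0 \<le> a1" "0 \<le> a2" "0 \<le> a3" "0 \<le> a1 + b1" "0 \<le> a2 + b2"
    and sum1: "a1 + b1 + a2 + b2 + a3 = 1" and sum2: "a1 + a2 + a3 \<le> 2"
    and eq1: "a1 * (\<beta> \<bullet> (z1 - x0)) + a2 * (\<beta> \<bullet> (z2 - x0)) + a3 * (\<beta> \<bullet> (z3 - x0)) = T * (\<beta> \<bullet> (A *v x0 + a))"
    and eq2: "2 * (b1 * (\<beta> \<bullet> (z1 - x0)) + b2 * (\<beta> \<bullet> (z2 - x0))) =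
       T * (a1 * (\<beta> \<bullet> (A *v (z1 - x0))) + a2 * (\<beta> \<bullet> (A *v (z2 - x0))) + a3 * (\<beta> \<bullet> (A *v (z3 - x0))))"
    and eq3: "b1 * (\<beta> \<bullet> (A *v (z1 - x0))) + b2 * (\<beta> \<bullet> (A *v (z2 - x0))) = 0"
  shows "\<exists>u T x. T \<ge> 0 \<and> piecewise_continuous_on 0 T u \<and> is_solution A a B u x0 T x
           \<and> x T \<in> Ff \<and> (\<forall>t\<in>{0..T}. x t \<in> S)"
proof -
  define P where "P = (a1/T) *\<^sub>R (z1 - x0) + (a2/T) *\<^sub>R (z2 - x0) + (a3/T) *\<^sub>R (z3 - x0)"
  define Q where "Q = (b1/T^2) *\<^sub>R (z1 - x0) + (b2/T^2) *\<^sub>R (z2 - x0)"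
  have TT: "T \<noteq> 0" using T by simp
  have c1: "\<beta> \<bullet> P = \<beta> \<bullet> (A *v x0 + a)"
  proof -
    have "\<beta> \<bullet> P = (a1 * (\<beta> \<bullet> (z1 - x0)) + a2 * (\<beta> \<bullet> (z2 - x0)) + a3 * (\<beta> \<bullet> (z3 - x0))) / T"
      unfolding P_def by (simp only: inner_add_right inner_scaleR_right) (simp add: add_divide_distrib)
    then show ?thesis using eq1 TT by simp
  qed
  have c2: "2 * (\<beta> \<bullet> Q) = \<beta> \<bullet> (A *v P)"
  proof -
    define X where "X = a1 * (\<beta> \<bullet> (A *v (z1 - x0))) + a2 * (\<beta> \<bullet> (A *v (z2 - x0))) + a3 * (\<beta> \<bullet> (A *v (z3 - x0)))"
    have h1: "2 * (\<beta> \<bullet> Q) = 2 * (b1 * (\<beta> \<bullet> (z1 - x0)) + b2 * (\<beta> \<bullet> (z2 - x0))) / T^2"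
      unfolding Q_def by (simp only: inner_add_right inner_scaleR_right) (simp add: add_divide_distrib distrib_left)
    have h2: "\<beta> \<bullet> (A *v P) = X / T"
      unfolding P_def X_def by (simp only: matrix_vector_right_distrib matrix_vector_mult_scaleR inner_add_right inner_scaleR_right) (simp add: add_divide_distrib)
    have "2 * (\<beta> \<bullet> Q) = T * X / T^2" using h1 eq2 by (simp add: X_def)
    also have "\<dots> = X / T" using TT by (simp add: power2_eq_square)
    finally show ?thesis using h2 by simp
  qed
  have c3: "\<beta> \<bullet> (A *v Q) = 0"
  proof -
    have "\<beta> \<bullet> (A *v Q) = (b1 * (\<beta> \<bullet> (A *v (z1 - x0))) + b2 * (\<beta> \<bullet> (A *v (z2 - x0)))) / T^2"
      unfolding Q_def by (simp only: matrix_vector_right_distrib matrix_vector_mult_scaleR inner_add_right inner_scaleR_right) (simp add: add_divide_distrib)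
    then show ?thesis using eq3 by simp
  qed
  define l1 where "l1 = (\<lambda>t. a1 * (t/T) + b1 * (t/T)^2)"
  define l2 where "l2 = (\<lambda>t. a2 * (t/T) + b2 * (t/T)^2)"
  define l3 where "l3 = (\<lambda>t. a3 * (t/T))"
  have xform: "x0 + t *\<^sub>R P + t^2 *\<^sub>R Q = (1 - l1 t - l2 t - l3 t) *\<^sub>R x0 + l1 t *\<^sub>R z1 + l2 t *\<^sub>R z2 + l3 t *\<^sub>R z3" for t
    unfolding P_def Q_def l1_def l2_def l3_def using TT
    by (simp add: vec_eq_iff field_simps power2_eq_square)
  have coef: "0 \<le> l1 t \<and> 0 \<le> l2 t \<and> 0 \<le> l3 t \<and> 0 \<le> 1 - l1 t - l2 t - l3 t" if "t \<in> {0..T}" for t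
  proof -
    define \<tau> where "\<tau> = t / T"
    have \<tau>: "0 \<le> \<tau>" "\<tau> \<le> 1" using that T by (auto simp: \<tau>_def)
    have l1t: "l1 t = a1 * \<tau> + b1 * \<tau>^2" by (simp add: l1_def \<tau>_def)
    have l2t: "l2 t = a2 * \<tau> + b2 * \<tau>^2" by (simp add: l2_def \<tau>_def)
    have e1: "l1 t = \<tau> * ((1 - \<tau>) * a1 + \<tau> * (a1 + b1))" unfolding l1t by (simp add: algebra_simps power2_eq_square)
    have e2: "l2 t = \<tau> * ((1 - \<tau>) * a2 + \<tau> * (a2 + b2))" unfolding l2t by (simp add: algebra_simps power2_eq_square)
    have e3: "l3 t = \<tau> * a3" by (simp add: l3_def \<tau>_def)
    have b1: "b1 = 1 - a1 - a2 - a3 - b2" using sum1 by simp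
    have e4: "1 - l1 t - l2 t - l3 t = (1 - \<tau>) * (1 + (1 - (a1 + a2 + a3)) * \<tau>)"
      unfolding l1t l2t e3 b1 by (simp add: algebra_simps power2_eq_square)
    have "0 \<le> (1 - \<tau>) * a1 + \<tau> * (a1 + b1)"
    proof -
     have "0 \<le> (1 - \<tau>) * a1" using \<tau> pos by simp
      moreover have "0 \<le> \<tau> * (a1 + b1)" using \<tau> pos by simp
      ultimately show ?thesis by linarith
    qed
    moreover have "0 \<le> (1 - \<tau>) * a2 + \<tau> * (a2 + b2)"
    proof -
     have "0 \<le> (1 - \<tau>) * a2" using \<tau> pos by simp
      moreover have "0 \<le> \<tau> * (a2 + b2)" using \<tau> pos by simp
      ultimately show ?thesis by linarith
    qed
    moreover have "0 \<le> 1 + (1 - (a1 + a2 + a3)) * \<tau>"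
    proof -
      have "(1 - (a1 + a2 + a3)) * \<tau> \<ge> (-1) * \<tau>" using sum2 \<tau> by (intro mult_right_mono) auto
      then show ?thesis using \<tau> by linarith
    qed
    ultimately show ?thesis using \<tau> pos e1 e2 e3 e4 by simp
  qed
  show ?thesis
  proof (rule quad_traj[OF ImB _ c1 c2 c3])
    show "0 \<le> T" using T by simp
    show "x0 + t *\<^sub>R P + t^2 *\<^sub>R Q \<in> S" if "t \<in> {0..T}" for t
    proof -
      have "(1 - l1 t - l2 t - l3 t) *\<^sub>R x0 + l1 t *\<^sub>R z1 + l2 t *\<^sub>R z2 + l3 t *\<^sub>R z3 \<in> S"
        using coef[OF that] S Ff by (intro convex4) auto
      then show ?thesis by (simp add: xform)
    qed
    have "l1 T *\<^sub>R z1 + l2 T *\<^sub>R z2 + l3 T *\<^sub>R z3 \<in> Ff"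
    proof -
      have "0 *\<^sub>R z1 + l1 T *\<^sub>R z1 + l2 T *\<^sub>R z2 + l3 T *\<^sub>R z3 \<in> Ff"
        using coef[of T] T Ff sum1 by (intro convex4) (auto simp: l1_def l2_def l3_def)
      then show ?thesis by simp
    qed
    moreover have "1 - l1 T - l2 T - l3 T = 0" using sum1 TT by (simp add: l1_def l2_def l3_def)
    ultimately show "x0 + T *\<^sub>R P + T^2 *\<^sub>R Q \<in> Ff" by (simp add: xform)
  qed
qed

lemma bary_identities:
  fixes D1 D2 E1 E2 f0 \<rho> \<theta> \<Delta> Dt Et T a1 a2 b1 b2 :: real
  assumes \<Delta>_def: "\<Delta> = D1*E2 - D2*E1"
  and Dt_def: "Dt = (1-\<theta>)*D1 + \<theta>*D2" and Et_def: "Et = (1-\<theta>)*E1 + \<theta>*E2"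
  and T_def: "T = 2*\<rho>*Dt / (2*f0 + \<rho>*Et)"
  and a1_def: "a1 = (T*f0*E2 - D2*\<rho>*Et)/\<Delta>" and a2_def: "a2 = (D1*\<rho>*Et - E1*T*f0)/\<Delta>"
  and b1_def: "b1 = T*\<rho>*Et*E2/(2*\<Delta>)" and b2_def: "b2 = - T*\<rho>*Et*E1/(2*\<Delta>)"
  and "\<Delta> \<noteq> 0" "2*f0 + \<rho>*Et \<noteq> 0"
  shows "a1 + b1 = \<rho>*(1-\<theta>)" "a2 + b2 = \<rho>*\<theta>" "a1*D1 + a2*D2 = T*f0"
    "2*(b1*D1+b2*D2) = T*(a1*E1+a2*E2)" "b1*E1+b2*E2 = 0"
proof -
  have TT: "T * (2*f0 + \<rho>*Et) = 2*\<rho>*Dt" using assms(10) by (simp add: T_def)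
  have "a1 + b1 = (T*E2*(2*f0 + \<rho>*Et) - 2*D2*\<rho>*Et)/(2*\<Delta>)"
    using assms(9) by (simp add: a1_def b1_def field_simps)
  also have "\<dots> = (2*\<rho>*Dt*E2 - 2*D2*\<rho>*Et)/(2*\<Delta>)" unfolding TT[symmetric] by (simp add: algebra_simps)
  also have "\<dots> = \<rho>*(1-\<theta>)" using assms(9) unfolding Dt_def Et_def \<Delta>_def by (simp add: field_simps)
  finally show "a1 + b1 = \<rho>*(1-\<theta>)" .
  have "a2 + b2 = (2*D1*\<rho>*Et - T*E1*(2*f0 + \<rho>*Et))/(2*\<Delta>)"
    using assms(9) by (simp add: a2_def b2_def field_simps)
  also have "\<dots> = (2*D1*\<rho>*Et - 2*\<rho>*Dt*E1)/(2*\<Delta>)" unfolding TT[symmetric] by (simp add: algebra_simps)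
  also have "\<dots> = \<rho>*\<theta>" using assms(9) unfolding Dt_def Et_def \<Delta>_def by (simp add: field_simps)
  finally show "a2 + b2 = \<rho>*\<theta>" .
  have num: "(T*f0*E2 - D2*\<rho>*Et)*D1 + (D1*\<rho>*Et - E1*T*f0)*D2 = T*f0*\<Delta>"
    unfolding \<Delta>_def by (simp add: algebra_simps)
  show "a1*D1 + a2*D2 = T*f0" using assms(9) unfolding a1_def a2_def
    by (simp add: divide_simps num[symmetric])
  have num2: "(T*f0*E2 - D2*\<rho>*Et)*E1 + (D1*\<rho>*Et - E1*T*f0)*E2 = \<rho>*Et*\<Delta>"
    unfolding \<Delta>_def by (simp add: algebra_simps)
  have aE: "a1*E1+a2*E2 = \<rho>*Et" using assms(9) unfolding a1_def a2_def
    by (simp add: divide_simps num2[symmetric])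
  show "2*(b1*D1+b2*D2) = T*(a1*E1+a2*E2)" unfolding aE using assms(9) unfolding b1_def b2_def
    by (simp add: divide_simps) (simp add: \<Delta>_def algebra_simps)
  show "b1*E1+b2*E2 = 0" using assms(9) unfolding b1_def b2_def by (simp add: field_simps)
qed

lemma isCont_at_left: "isCont f x \<Longrightarrow> (f \<longlongrightarrow> f x) (at_left (x::real))"
  by (simp add: isCont_def filterlim_at_split)

lemma isCont_at_right: "isCont f x \<Longrightarrow> (f \<longlongrightarrow> f x) (at_right (x::real))"
  by (simp add: isCont_def filterlim_at_split)

lemma caseB_reals:
  fixes D1 D2 E1 E2 f0 :: real
  assumes D1: "D1 < 0" and D2: "0 \<le> D2" and f0: "f0 \<le> 0" "f0 + E1 \<le> 0" "f0 + E2 \<le> 0"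
    and \<Delta>: "D1*E2 - D2*E1 \<noteq> 0"
  shows "\<exists>T a1 a2 b1 b2. T > 0 \<and> 0 \<le> a1 \<and> 0 \<le> a2 \<and> 0 \<le> a1+b1 \<and> 0 \<le> a2+b2 \<and> a1+b1+a2+b2 = 1
    \<and> a1+a2 \<le> 2 \<and> a1*D1 + a2*D2 = T*f0 \<and> 2*(b1*D1+b2*D2) = T*(a1*E1+a2*E2) \<and> b1*E1+b2*E2 = 0"
proof -
  define \<Delta> where "\<Delta> = D1*E2 - D2*E1"
  have \<Delta>0: "\<Delta> \<noteq> 0" using \<Delta> by (simp add: \<Delta>_def)
  have DD: "D2 - D1 > 0" using D1 D2 by simp
  define \<theta>M where "\<theta>M = -D1/(D2-D1)"
  have \<theta>M: "0 < \<theta>M" "\<theta>M \<le> 1" using D1 D2 DD by (auto simp: \<theta>M_def field_simps)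
  define Dt where "Dt = (\<lambda>\<theta>::real. (1-\<theta>)*D1 + \<theta>*D2)"
  define Et where "Et = (\<lambda>\<theta>::real. (1-\<theta>)*E1 + \<theta>*E2)"
  define Tf where "Tf = (\<lambda>\<theta>. 2*Dt \<theta> / (2*f0 + Et \<theta>))"
  define A1 where "A1 = (\<lambda>\<theta>. (Tf \<theta>*f0*E2 - D2*Et \<theta>)/\<Delta>)"
  define A2 where "A2 = (\<lambda>\<theta>. (D1*Et \<theta> - E1*Tf \<theta>*f0)/\<Delta>)"
  have DtM: "Dt \<theta>M = 0" using DD by (simp add: Dt_def \<theta>M_def field_simps)
  have Dtneg: "Dt \<theta> < 0" if "\<theta> < \<theta>M" for \<theta>
  proof -
    have "Dt \<theta> = (\<theta> - \<theta>M) * (D2 - D1)" using DD by (simp add: Dt_def \<theta>M_def field_simps)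
    then show ?thesis using that DD by (simp add: mult_neg_pos)
  qed
  have th1: "(1-\<theta>M)*(D2-D1) = D2" and th2: "\<theta>M*(D2-D1) = -D1" using DD by (simp_all add: \<theta>M_def field_simps)
  have "Et \<theta>M * (D2 - D1) = ((1-\<theta>M)*(D2-D1))*E1 + (\<theta>M*(D2-D1))*E2" by (simp add: Et_def algebra_simps)
  then have EtM: "Et \<theta>M * (D2 - D1) = - \<Delta>" unfolding th1 th2 by (simp add: \<Delta>_def algebra_simps)
  have "Et \<theta>M = (Et \<theta>M * (D2 - D1))/(D2-D1)" using DD by simp
  then have EtM': "Et \<theta>M = -\<Delta>/(D2-D1)" by (simp only: EtM)
  have EtM0: "Et \<theta>M \<noteq> 0" using EtM \<Delta>0 by auto
  have "f0 + Et \<theta>M = (1-\<theta>M)*(f0+E1) + \<theta>M*(f0+E2)" by (simp add: Et_def algebra_simps)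
  also have "\<dots> \<le> 0"
  proof -
    have "(1-\<theta>M)*(f0+E1) \<le> 0" using \<theta>M f0 by (intro mult_nonneg_nonpos) auto
    moreover have "\<theta>M*(f0+E2) \<le> 0" using \<theta>M f0 by (intro mult_nonneg_nonpos) auto
    ultimately show ?thesis by linarith
  qed
  finally have den: "2*f0 + Et \<theta>M < 0" using EtM0 f0 by linarith
  have TfM: "Tf \<theta>M = 0" by (simp add: Tf_def DtM)
  have cont: "isCont Tf \<theta>M" "isCont A1 \<theta>M" "isCont A2 \<theta>M" "isCont (\<lambda>\<theta>. 2*f0 + Et \<theta>) \<theta>M"
    using den \<Delta>0 unfolding A1_def A2_def Tf_def Dt_def Et_def by (auto intro!: continuous_intros)
  have A2M: "A2 \<theta>M = -D1/(D2-D1)"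
  proof -
    have "A2 \<theta>M = D1 * Et \<theta>M / \<Delta>" by (simp add: A2_def TfM)
    also have "\<dots> = -D1/(D2-D1)" using \<Delta>0 by (simp add: EtM')
    finally show ?thesis .
  qed
  have A1M: "A1 \<theta>M = D2/(D2-D1)"
  proof -
    have "A1 \<theta>M = - D2 * Et \<theta>M / \<Delta>" by (simp add: A1_def TfM)
    also have "\<dots> = D2/(D2-D1)" using \<Delta>0 by (simp add: EtM')
    finally show ?thesis .
  qed
  have A2pos: "A2 \<theta>M > 0" using A2M D1 DD by (simp add: divide_neg_pos)
  have "A1 \<theta>M + A2 \<theta>M = (D2 - D1)/(D2-D1)" unfolding A1M A2M by (simp add: diff_divide_distrib[symmetric])
  then have sumM: "A1 \<theta>M + A2 \<theta>M < 2" using DD by simp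
  have ev: "eventually (\<lambda>\<theta>. 2*f0 + Et \<theta> < 0 \<and> A2 \<theta> > 0 \<and> A1 \<theta> + A2 \<theta> < 2 \<and> (D2 > 0 \<longrightarrow> A1 \<theta> > 0) \<and> \<theta> > 0) (at_left \<theta>M)"
  proof (intro eventually_conj)
    show "eventually (\<lambda>\<theta>. 2*f0 + Et \<theta> < 0) (at_left \<theta>M)"
      using order_tendstoD(2)[OF isCont_at_left[OF cont(4)] den] .
    show "eventually (\<lambda>\<theta>. A2 \<theta> > 0) (at_left \<theta>M)"
      using order_tendstoD(1)[OF isCont_at_left[OF cont(3)] A2pos] .
    have "isCont (\<lambda>\<theta>. A1 \<theta> + A2 \<theta>) \<theta>M" using cont by (intro continuous_intros)
    show "eventually (\<lambda>\<theta>. A1 \<theta> + A2 \<theta> < 2) (at_left \<theta>M)"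
      using order_tendstoD(2)[OF isCont_at_left[OF \<open>isCont (\<lambda>\<theta>. A1 \<theta> + A2 \<theta>) \<theta>M\<close>] sumM] .
    show "eventually (\<lambda>\<theta>. D2 > 0 \<longrightarrow> A1 \<theta> > 0) (at_left \<theta>M)"
    proof (cases "D2 > 0")
      case True
      then have "A1 \<theta>M > 0" using A1M DD by simp
      from order_tendstoD(1)[OF isCont_at_left[OF cont(2)] this] show ?thesis
        by (rule eventually_mono) simp
    qed simp
    show "eventually (\<lambda>\<theta>. \<theta> > 0) (at_left \<theta>M)"
      unfolding eventually_at_left_field using \<theta>M by (intro exI[of _ 0]) auto
  qed
  then obtain b where b: "b < \<theta>M" and bP: "\<And>y. b < y \<Longrightarrow> y < \<theta>M \<Longrightarrow> 2*f0 + Et y < 0 \<and> A2 y > 0 \<and> A1 y + A2 y < 2 \<and> (D2 > 0 \<longrightarrow> A1 y > 0) \<and> y > 0"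
    unfolding eventually_at_left_field by blast
  define \<theta> where "\<theta> = (b + \<theta>M)/2"
  have \<theta>: "b < \<theta>" "\<theta> < \<theta>M" using b by (auto simp: \<theta>_def)
  note P = bP[OF \<theta>]
  have den\<theta>: "2*f0 + 1*Et \<theta> \<noteq> 0" using P by simp
  define T where "T = 2*1*Dt \<theta> / (2*f0 + 1*Et \<theta>)"
  define a1 where "a1 = (T*f0*E2 - D2*1*Et \<theta>)/\<Delta>"
  define a2 where "a2 = (D1*1*Et \<theta> - E1*T*f0)/\<Delta>"
  define b1 where "b1 = T*1*Et \<theta>*E2/(2*\<Delta>)"
  define b2 where "b2 = - T*1*Et \<theta>*E1/(2*\<Delta>)"
  note ids = bary_identities[OF \<Delta>_def _ _ T_def a1_def a2_def b1_def b2_def \<Delta>0 den\<theta>, OF Dt_def[THEN fun_cong] Et_def[THEN fun_cong]]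
  have T: "T > 0" using Dtneg[OF \<theta>(2)] P unfolding T_def by (simp add: divide_neg_neg)
  have A1eq: "a1 = A1 \<theta>" "a2 = A2 \<theta>" by (simp_all add: a1_def a2_def A1_def A2_def T_def Tf_def)
  have a1: "0 \<le> a1"
  proof (cases "D2 > 0")
    case True then show ?thesis using P A1eq by simp
  next
    case False
    then have "D2 = 0" using D2 by simp
    then have "a1 = T*f0*E2/(D1*E2)" by (simp add: a1_def \<Delta>_def)
    also have "\<dots> = T*f0/D1" using \<Delta>0 \<open>D2 = 0\<close> by (simp add: \<Delta>_def)
    finally have "a1 = T*f0/D1" .
    moreover have "0 \<le> T*f0/D1" using T f0(1) D1 by (intro divide_nonpos_neg mult_nonneg_nonpos) auto
    ultimately show ?thesis by simp
  qed
  have a2: "0 \<le> a2" and s2: "a1 + a2 \<le> 2" using P A1eq by auto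
  have "a1 + b1 = 1 - \<theta>" "a2 + b2 = \<theta>" using ids(1,2) by simp_all
  moreover have "\<theta> \<le> 1" "0 \<le> \<theta>" using \<theta> \<theta>M P by auto
  ultimately show ?thesis using T a1 a2 s2 ids(3-5)
    by (intro exI[of _ T] exI[of _ a1] exI[of _ a2] exI[of _ b1] exI[of _ b2]) auto
qed



lemma caseC_reals:
  fixes D1 D2 E1 E2 f0 :: real
  assumes D1: "D1 < 0" and f0: "f0 < 0" and \<Delta>: "D1*E2 - D2*E1 \<noteq> 0"
  shows "\<exists>T a1 a2 a3 b1 b2. T > 0 \<and> 0 \<le> a1 \<and> 0 \<le> a2 \<and> 0 \<le> a3 \<and> 0 \<le> a1+b1 \<and> 0 \<le> a2+b2
    \<and> a1+b1+a2+b2+a3 = 1 \<and> a1+a2+a3 \<le> 2 \<and> a1*D1 + a2*D2 = T*f0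
    \<and> 2*(b1*D1+b2*D2) = T*(a1*E1+a2*E2) \<and> b1*E1+b2*E2 = 0"
proof -
  define \<Delta> where "\<Delta> = D1*E2 - D2*E1"
  have \<Delta>0: "\<Delta> \<noteq> 0" using \<Delta> by (simp add: \<Delta>_def)
  define \<theta> where "\<theta> = -D1/(2*(\<bar>D2\<bar> - D1))"
  have pos: "\<bar>D2\<bar> - D1 > 0" using D1 by simp
  have \<theta>: "0 < \<theta>" "\<theta> < 1" using D1 pos by (auto simp: \<theta>_def field_simps)
  define Dt where "Dt = (1-\<theta>)*D1 + \<theta>*D2"
  define Et where "Et = (1-\<theta>)*E1 + \<theta>*E2"
  have "Dt = D1 + \<theta>*(D2 - D1)" by (simp add: Dt_def algebra_simps)
  also have "\<dots> \<le> D1 + \<theta>*(\<bar>D2\<bar> - D1)" using \<theta> by (intro add_left_mono mult_left_mono) auto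
  also have "\<theta>*(\<bar>D2\<bar> - D1) = -D1/2" using pos by (simp add: \<theta>_def field_simps)
  finally have Dtneg: "Dt < 0" using D1 by simp
  define G1 where "G1 = (\<lambda>\<rho>. (2*Dt*f0*E2/(2*f0+\<rho>*Et) - D2*Et)/\<Delta>)"
  define G2 where "G2 = (\<lambda>\<rho>. (D1*Et - E1*(2*Dt*f0/(2*f0+\<rho>*Et)))/\<Delta>)"
  have cont: "isCont G1 0" "isCont G2 0" "isCont (\<lambda>\<rho>. 2*f0+\<rho>*Et) 0"
    using f0 \<Delta>0 unfolding G1_def G2_def by (auto intro!: continuous_intros)
  have G10: "G1 0 = 1 - \<theta>"
  proof -
    have "G1 0 = (Dt*E2 - D2*Et)/\<Delta>" using f0 by (simp add: G1_def)
    also have "Dt*E2 - D2*Et = (1-\<theta>)*\<Delta>" by (simp add: Dt_def Et_def \<Delta>_def algebra_simps)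
    finally show ?thesis using \<Delta>0 by simp
  qed
  have G20: "G2 0 = \<theta>"
  proof -
    have "G2 0 = (D1*Et - E1*Dt)/\<Delta>" using f0 by (simp add: G2_def)
    also have "D1*Et - E1*Dt = \<theta>*\<Delta>" by (simp add: Dt_def Et_def \<Delta>_def algebra_simps)
    finally show ?thesis using \<Delta>0 by simp
  qed
  have ev: "eventually (\<lambda>\<rho>. 2*f0+\<rho>*Et < 0 \<and> G1 \<rho> > 0 \<and> G2 \<rho> > 0 \<and> G1 \<rho> + G2 \<rho> < 2 \<and> \<rho> < 1) (at_right 0)"
  proof (intro eventually_conj)
    show "eventually (\<lambda>\<rho>. 2*f0+\<rho>*Et < 0) (at_right 0)"
      using order_tendstoD(2)[OF isCont_at_right[OF cont(3)]] f0 by simp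
    show "eventually (\<lambda>\<rho>. G1 \<rho> > 0) (at_right 0)"
      using order_tendstoD(1)[OF isCont_at_right[OF cont(1)]] G10 \<theta> by simp
    show "eventually (\<lambda>\<rho>. G2 \<rho> > 0) (at_right 0)"
      using order_tendstoD(1)[OF isCont_at_right[OF cont(2)]] G20 \<theta> by simp
    have c: "isCont (\<lambda>\<rho>. G1 \<rho> + G2 \<rho>) 0" using cont by (intro continuous_intros)
    show "eventually (\<lambda>\<rho>. G1 \<rho> + G2 \<rho> < 2) (at_right 0)"
      using order_tendstoD(2)[OF isCont_at_right[OF c]] G10 G20 by simp
    show "eventually (\<lambda>\<rho>. \<rho> < 1) (at_right (0::real))"
      unfolding eventually_at_right_field by (intro exI[of _ 1]) auto
  qed
  then obtain \<rho> where \<rho>: "\<rho> > 0" "2*f0+\<rho>*Et < 0" "G1 \<rho> > 0" "G2 \<rho> > 0" "G1 \<rho> + G2 \<rho> < 2" "\<rho> < 1"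
  proof -
    from ev obtain b where "b > 0" and bP: "\<And>y. y > 0 \<Longrightarrow> y < b \<Longrightarrow> 2*f0+y*Et < 0 \<and> G1 y > 0 \<and> G2 y > 0 \<and> G1 y + G2 y < 2 \<and> y < 1"
      unfolding eventually_at_right_field by auto
    then have "b/2 > 0" "b/2 < b" by auto
    from bP[OF this] \<open>b/2 > 0\<close> show ?thesis using that by blast
  qed
  have den: "2*f0 + \<rho>*Et \<noteq> 0" using \<rho> by simp
  define T where "T = 2*\<rho>*Dt / (2*f0 + \<rho>*Et)"
  define a1 where "a1 = (T*f0*E2 - D2*\<rho>*Et)/\<Delta>"
  define a2 where "a2 = (D1*\<rho>*Et - E1*T*f0)/\<Delta>"
  define b1 where "b1 = T*\<rho>*Et*E2/(2*\<Delta>)"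
  define b2 where "b2 = - T*\<rho>*Et*E1/(2*\<Delta>)"
  note ids = bary_identities[OF \<Delta>_def Dt_def Et_def T_def a1_def a2_def b1_def b2_def \<Delta>0 den]
  have "2*\<rho>*Dt < 0" using Dtneg \<rho> by (simp add: mult_pos_neg)
  then have T: "T > 0" using \<rho>(2) unfolding T_def by (rule divide_neg_neg)
  have tfe: "T*f0 = \<rho>*(2*Dt*f0/(2*f0+\<rho>*Et))" unfolding T_def by simp
  have a1: "a1 = \<rho> * G1 \<rho>" unfolding a1_def G1_def
    by (simp add: tfe algebra_simps)
  have a2: "a2 = \<rho> * G2 \<rho>" unfolding a2_def G2_def
    by (simp add: tfe algebra_simps)
  have "a1 + a2 + (1 - \<rho>) \<le> 2"
  proof -
    have "a1 + a2 = \<rho> * (G1 \<rho> + G2 \<rho>)" by (simp add: a1 a2 algebra_simps)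
    also have "\<dots> \<le> \<rho> * 2" using \<rho> by (intro mult_left_mono) auto
    finally show ?thesis using \<rho> by simp
  qed
  moreover have "0 \<le> a1" unfolding a1 using \<rho>(1,3) by simp
  moreover have "0 \<le> a2" unfolding a2 using \<rho>(1,4) by simp
  moreover have "0 \<le> a1 + b1" "0 \<le> a2 + b2" using ids(1,2) \<rho>(1,6) \<theta> by simp_all
  moreover have "a1+b1+a2+b2+(1-\<rho>) = 1" using ids(1,2) by (simp add: algebra_simps)
  ultimately show ?thesis using ids(3-5) T \<rho>(1,6)
    by (intro exI[of _ T] exI[of _ a1] exI[of _ a2] exI[of _ "1 - \<rho>"] exI[of _ b1] exI[of _ b2] conjI) (assumption | linarith)+
qed


lemma ImB_surj:
  fixes B :: "real^'m^'n" and \<beta> :: "real^'n"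
  assumes rk: "rank B = CARD('n) - 1" and b0: "\<beta> \<noteq> 0" and orth: "\<forall>y\<in>ImB B. \<beta> \<bullet> y = 0"
  shows "\<beta> \<bullet> w = 0 \<Longrightarrow> \<exists>u. B *v u = w"
proof -
  assume w: "\<beta> \<bullet> w = 0"
  define R where "R = range (\<lambda>x. B *v x)"
  have sR: "subspace R" unfolding subspace_def
  proof (intro conjI ballI allI)
    show "0 \<in> R" unfolding R_def by (rule range_eqI[of _ _ 0]) simp
    fix x y assume "x \<in> R" "y \<in> R"
    then obtain p q where "x = B *v p" "y = B *v q" by (auto simp: R_def)
    then show "x + y \<in> R" unfolding R_def by (intro range_eqI[of _ _ "p + q"]) (simp add: matrix_vector_right_distrib)
  next
    fix c :: real and x assume "x \<in> R"
    then obtain p where "x = B *v p" by (auto simp: R_def)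
    then show "c *\<^sub>R x \<in> R" unfolding R_def by (intro range_eqI[of _ _ "c *\<^sub>R p"]) (simp add: matrix_vector_mult_scaleR)
  qed
  have sub: "R \<subseteq> {x. \<beta> \<bullet> x = 0}" using orth by (auto simp: R_def ImB_def)
  have "dim {x. \<beta> \<bullet> x = 0} = CARD('n) - 1" using dim_hyperplane[OF b0] by simp
  also have "\<dots> = dim R" using rk by (simp add: rank_dim_range R_def)
  finally have "R = {x. \<beta> \<bullet> x = 0}"
    by (intro subspace_dim_equal[OF sR subspace_hyperplane sub]) simp
  then have "w \<in> R" using w by simp
  then show ?thesis by (auto simp: R_def)
qed

lemma ctrl_not_eig:
  fixes A :: "real^'n^'n" and B :: "real^'m^'n" and \<beta> :: "real^'n"
  assumes ctrl: "controllable A B" and b0: "\<beta> \<noteq> 0" and orth: "\<forall>y\<in>ImB B. \<beta> \<bullet> y = 0"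
  shows "\<beta> v* A \<noteq> c *\<^sub>R \<beta>"
proof
  assume eig: "\<beta> v* A = c *\<^sub>R \<beta>"
  have key: "\<beta> \<bullet> (((((**) A) ^^ k) B) *v x) = 0" for k x
  proof (induction k arbitrary: x)
    case 0
    then show ?case using orth by (simp add: ImB_def)
  next
    case (Suc k)
    have "\<beta> \<bullet> (((((**) A) ^^ Suc k) B) *v x) = \<beta> \<bullet> (A *v ((((**) A) ^^ k) B *v x))"
      by (simp add: matrix_vector_mul_assoc)
    also have "\<dots> = (\<beta> v* A) \<bullet> ((((**) A) ^^ k) B *v x)" by (simp add: dot_lmul_matrix)
    also have "\<dots> = c * (\<beta> \<bullet> ((((**) A) ^^ k) B *v x))" by (simp add: eig)
    also have "\<dots> = 0" using Suc by simp
    finally show ?case .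
  qed
  have "(\<Union>k\<in>{..<CARD('n)}. columns ((((**) A) ^^ k) B)) \<subseteq> {x. \<beta> \<bullet> x = 0}"
    using key by (auto simp: columns_def matrix_vector_mult_basis[symmetric])
  then have "span (\<Union>k\<in>{..<CARD('n)}. columns ((((**) A) ^^ k) B)) \<subseteq> {x. \<beta> \<bullet> x = 0}"
    by (intro span_minimal subspace_hyperplane)
  then have "\<beta> \<in> {x. \<beta> \<bullet> x = 0}" using ctrl unfolding controllable_def by blast
  then show False using b0 by simp
qed

lemma reach_mono:
  fixes A :: "real^'n^'n" and a :: "real^'n" and B :: "real^'m^'n" and \<beta> x0 :: "real^'n"
  assumes orth: "\<forall>y\<in>ImB B. \<beta> \<bullet> y = 0" and fneg: "\<forall>x\<in>P. \<beta> \<bullet> (A *v x + a) \<le> 0"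
    and reachP: "reach A a B P F" and x0: "x0 \<in> P" "x0 \<notin> F"
  shows "\<exists>y\<in>F. \<beta> \<bullet> y \<le> \<beta> \<bullet> x0 \<and> (\<beta> \<bullet> y = \<beta> \<bullet> x0 \<longrightarrow> \<beta> \<bullet> (A *v x0 + a) = 0 \<and> \<beta> \<bullet> (A *v y + a) = 0)"
proof -
  obtain u T X where T: "T \<ge> 0" and sol: "is_solution A a B u x0 T X" and XT: "X T \<in> F"
    and inP: "\<forall>t\<in>{0..T}. X t \<in> P"
    using reachP x0 unfolding reach_def by blast
  define g where "g = (\<lambda>s. A *v X s + a + B *v u s)"
  have contX: "continuous_on {0..T} X" and hX: "\<And>t. t \<in> {0..T} \<Longrightarrow> X t = x0 + integral {0..t} g"
    using sol unfolding is_solution_def g_def by auto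
  have X0: "X 0 = x0" using hX[of 0] T by simp
  have "T \<noteq> 0" using X0 XT x0 by auto
  with T have Tpos: "T > 0" by simp
  have int: "g integrable_on {0..T}"
  proof (rule ccontr)
    assume "\<not> g integrable_on {0..T}"
    then have "integral {0..T} g = 0" by (rule not_integrable_integral)
    then have "X T = x0" using hX[of T] T by simp
    then show False using XT x0 by simp
  qed
  define h where "h = (\<lambda>s. \<beta> \<bullet> (A *v X s + a))"
  have gh: "\<beta> \<bullet> g s = h s" for s
    using orth by (simp add: g_def h_def inner_add_right ImB_def)
  have "\<beta> \<bullet> integral {0..T} g = integral {0..T} ((\<lambda>v. \<beta> \<bullet> v) \<circ> g)"
    by (rule integral_linear[OF int bounded_linear_inner_right, symmetric])
  also have "\<dots> = integral {0..T} h" by (simp add: o_def gh)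
  finally have sT: "\<beta> \<bullet> X T = \<beta> \<bullet> x0 + integral {0..T} h"
    using hX[of T] T by (simp add: inner_add_right)
  have cAX: "continuous_on {0..T} (\<lambda>x. A *v X x)"
    using continuous_on_compose[OF contX matrix_vector_mult_linear_continuous_on[of "X ` {0..T}" A]] by (simp add: o_def)
  have conth: "continuous_on {0..T} h" unfolding h_def
    by (intro continuous_intros cAX)
  have hneg: "\<And>s. s \<in> {0..T} \<Longrightarrow> h s \<le> 0" using inP fneg by (auto simp: h_def)
  have inth: "h integrable_on {0..T}" using conth by (rule integrable_continuous_real)
  have le: "integral {0..T} h \<le> 0"
    using integral_le[OF inth integrable_0 hneg] by simp
  have eq: "\<beta> \<bullet> (A *v x0 + a) = 0 \<and> \<beta> \<bullet> (A *v X T + a) = 0" if "integral {0..T} h = 0"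
  proof -
    have c2: "continuous_on {0..T} (\<lambda>s. - h s)" using conth by (intro continuous_intros)
    have "integral {0..T} (\<lambda>s. - h s) = 0" using that by (simp add: integral_neg)
    then have "\<forall>s\<in>{0..T}. - h s = 0"
      using integral_eq_0_iff[OF c2 Tpos] hneg by auto
    then have "h 0 = 0" "h T = 0" using Tpos by auto
    then show ?thesis using X0 by (simp add: h_def)
  qed
  show ?thesis
    using XT sT le eq by (intro bexI[of _ "X T"]) auto
qed

lemma facet_witness:
  fixes F Pt :: "(real^'n) set" and lv x0 :: "real^'n"
  assumes "F face_of Pt" "convex Pt" "x0 \<in> Pt" "x0 \<notin> F" "aff_dim F = int CARD('n) - 1" "F \<noteq> {}"
    and "lv \<noteq> 0"
  shows "\<exists>w\<in>F. lv \<bullet> (w - x0) \<noteq> 0"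
proof (rule ccontr)
  assume "\<not> ?thesis"
  then have sub: "F \<subseteq> {x. lv \<bullet> x = lv \<bullet> x0}" by (auto simp: inner_diff_right)
  have "affine hull F \<subseteq> {x. lv \<bullet> x = lv \<bullet> x0}"
    using sub affine_hyperplane by (rule hull_minimal)
  moreover have "aff_dim (affine hull F) = aff_dim {x. lv \<bullet> x = lv \<bullet> x0}"
    using assms(5,7) by simp
  ultimately have "affine hull F = {x. lv \<bullet> x = lv \<bullet> x0}"
    using assms(6) by (intro affine_dim_equal) (auto simp: affine_hyperplane)
  then have "x0 \<in> affine hull F" by simp
  then have "x0 \<in> affine hull F \<inter> Pt" using assms(3) by simp
  then have "x0 \<in> F" using face_of_imp_eq_affine_Int[OF assms(2,1)] by simp
  then show False using assms(4) by simp
qed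


theorem proposition2:
  fixes A :: "real^'n^'n" and a :: "real^'n" and B :: "real^'m^'n"
    and P F Pt :: "(real^'n) set" and \<beta> v :: "real^'n"
  assumes P: "polytope P" "aff_dim P = int CARD('n)"
    and A1: "rank B = CARD('n) - 1"
    and A2: "controllable A B"
    and A3: "interior P \<inter> obs_set A a B = {}"
    and A4: "polytope F" "aff_dim F = int CARD('n) - 1" "F \<subseteq> frontier P"
    and beta: "norm \<beta> = 1" "\<forall>y\<in>ImB B. \<beta> \<bullet> y = 0" "\<forall>x\<in>P. \<beta> \<bullet> (A *v x + a) \<le> 0"
    and v: "v extreme_point_of F" "v \<in> F \<inter> Pplus \<beta> P"
    and Pt: "polytope Pt" "Pt \<subseteq> P" "aff_dim Pt = int CARD('n)" "F facet_of Pt"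
    and reachP: "reach A a B P F"
  shows "reach A a B Pt F"
  unfolding reach_def
proof
  fix x0 assume x0: "x0 \<in> Pt"
  have b0: "\<beta> \<noteq> 0" using beta(1) by auto
  note surjB = ImB_surj[OF A1 b0 beta(2)]
  have cPt: "convex Pt" using Pt(1) by (rule polytope_imp_convex)
  have cF: "convex F" using A4(1) by (rule polytope_imp_convex)
  have Fface: "F face_of Pt" using Pt(4) by (rule facet_of_imp_face_of)
  have FPt: "F \<subseteq> Pt" using Fface by (rule face_of_imp_subset)
  have x0P: "x0 \<in> P" using x0 Pt(2) by auto
  have FP: "F \<subseteq> P" using FPt Pt(2) by auto
  define f0 where "f0 = \<beta> \<bullet> (A *v x0 + a)"
  define D where "D = (\<lambda>z. \<beta> \<bullet> (z - x0))"
  define E where "E = (\<lambda>z. \<beta> \<bullet> (A *v (z - x0)))"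
  have fz: "\<beta> \<bullet> (A *v z + a) = f0 + E z" for z
    by (simp add: f0_def E_def matrix_vector_mult_diff_distrib inner_diff_right inner_add_right)
  have f0le: "f0 \<le> 0" using beta(3) x0P by (simp add: f0_def)
  have fFle: "f0 + E z \<le> 0" if "z \<in> F" for z
  proof -
    have "z \<in> P" using FP that by auto
    then have "\<beta> \<bullet> (A *v z + a) \<le> 0" using beta(3) by blast
    then show ?thesis using fz[of z] by simp
  qed
  let ?G = "\<exists>u T x. T \<ge> 0 \<and> piecewise_continuous_on 0 T u \<and> is_solution A a B u x0 T x
           \<and> x T \<in> F \<and> (\<forall>t\<in>{0..T}. x t \<in> Pt)"
  have caseA: ?G if z: "z \<in> F" "D z = 0" "f0 = 0" "E z = 0" for z
    apply (rule bary_traj[where T=1 and ?a1.0 = 1 and ?a2.0 = 0 and ?a3.0 = 0 and ?b1.0 = 0 and ?b2.0 = 0 and ?z1.0 = z and ?z2.0 = z and ?z3.0 = z, OF surjB cPt x0 FPt cF])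
    using z by (simp_all add: D_def E_def f0_def)
  have caseB: ?G if yv: "y' \<in> F" "v' \<in> F" "D y' < 0" "0 \<le> D v'" "D y' * E v' - D v' * E y' \<noteq> 0" for y' v'
  proof -
    obtain T a1 a2 b1 b2 where c: "T > 0" "0 \<le> a1" "0 \<le> a2" "0 \<le> a1+b1" "0 \<le> a2+b2" "a1+b1+a2+b2 = 1"
      "a1+a2 \<le> 2" "a1*D y' + a2*D v' = T*f0" "2*(b1*D y'+b2*D v') = T*(a1*E y'+a2*E v')" "b1*E y'+b2*E v' = 0"
      using caseB_reals[OF yv(3,4) f0le fFle[OF yv(1)] fFle[OF yv(2)] yv(5)] by blast
    show ?G
      apply (rule bary_traj[where T=T and ?a1.0 = a1 and ?a2.0 = a2 and ?a3.0 = 0 and ?b1.0 = b1 and ?b2.0 = b2 and ?z1.0 = y' and ?z2.0 = v' and ?z3.0 = y', OF surjB cPt x0 FPt cF])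
      using c yv unfolding D_def E_def f0_def by simp_all
  qed
  have caseC: ?G if yw: "y' \<in> F" "w' \<in> F" "z' \<in> F" "D y' < 0" "D y' * E w' - D w' * E y' \<noteq> 0"
      "D z' = 0" "E z' = 0" "f0 < 0" for y' w' z'
  proof -
    obtain T a1 a2 a3 b1 b2 where c: "T > 0" "0 \<le> a1" "0 \<le> a2" "0 \<le> a3" "0 \<le> a1+b1" "0 \<le> a2+b2"
      "a1+b1+a2+b2+a3 = 1" "a1+a2+a3 \<le> 2" "a1*D y' + a2*D w' = T*f0" "2*(b1*D y'+b2*D w') = T*(a1*E y'+a2*E w')" "b1*E y'+b2*E w' = 0"
      using caseC_reals[OF yw(4,8,5)] by blast
    show ?G
      apply (rule bary_traj[where T=T and ?a1.0 = a1 and ?a2.0 = a2 and ?a3.0 = a3 and ?b1.0 = b1 and ?b2.0 = b2 and ?z1.0 = y' and ?z2.0 = w' and ?z3.0 = z', OF surjB cPt x0 FPt cF])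
      using c yw unfolding D_def E_def f0_def by simp_all
  qed
  show ?G
  proof (cases "x0 \<in> F")
    case True
    have sol: "is_solution A a B (\<lambda>_. 0) x0 0 (\<lambda>_. x0)"
      unfolding is_solution_def by simp
    have pc: "piecewise_continuous_on 0 0 (\<lambda>_::real. 0::real^'m)"
      unfolding piecewise_continuous_on_def by (rule exI[of _ "{}"]) simp
    show ?G using True x0 sol pc by (intro exI[of _ "\<lambda>_. 0"] exI[of _ 0] exI[of _ "\<lambda>_. x0"]) auto
  next
    case notF: False
    obtain y where y: "y \<in> F" "\<beta> \<bullet> y \<le> \<beta> \<bullet> x0"
      and yeq: "\<beta> \<bullet> y = \<beta> \<bullet> x0 \<longrightarrow> \<beta> \<bullet> (A *v x0 + a) = 0 \<and> \<beta> \<bullet> (A *v y + a) = 0"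
      using reach_mono[OF beta(2) beta(3) reachP x0P notF] by blast
    have Dy: "D y \<le> 0" using y by (simp add: D_def inner_diff_right)
    show ?G
    proof (cases "D y = 0")
      case True
      then have "\<beta> \<bullet> y = \<beta> \<bullet> x0" by (simp add: D_def inner_diff_right)
      then have "f0 = 0" "f0 + E y = 0" using yeq fz[of y] by (simp_all add: f0_def)
      then show ?G using caseA[OF y(1) True] by simp
    next
      case False
      with Dy have Dy: "D y < 0" by simp
      have vF: "v \<in> F" and Dv: "0 \<le> D v" using v(2) x0P by (auto simp: Pplus_def D_def inner_diff_right)
      show ?G
      proof (cases "D y * E v - D v * E y = 0")
        case False
        then show ?G using caseB[OF y(1) vF Dy Dv] by simp
      next
        case yv0: True
        define lv where "lv = D y *\<^sub>R (\<beta> v* A) - E y *\<^sub>R \<beta>"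
        have lv0: "lv \<noteq> 0"
        proof
          assume "lv = 0"
          then have eq: "D y *\<^sub>R (\<beta> v* A) = E y *\<^sub>R \<beta>" by (simp add: lv_def)
          have "\<beta> v* A = (1 / D y) *\<^sub>R (D y *\<^sub>R (\<beta> v* A))" using Dy by simp
          also have "\<dots> = (E y / D y) *\<^sub>R \<beta>" unfolding eq by simp
          finally have "\<beta> v* A = (E y / D y) *\<^sub>R \<beta>" .
          then show False using ctrl_not_eig[OF A2 b0 beta(2)] by blast
        qed
        have lvw: "lv \<bullet> (w - x0) = D y * E w - D w * E y" for w
          by (simp add: lv_def D_def E_def inner_diff_left dot_lmul_matrix algebra_simps)
        obtain w where wF: "w \<in> F" and yw: "D y * E w - D w * E y \<noteq> 0"
          using facet_witness[OF Fface cPt x0 notF A4(2) _ lv0] vF lvw by auto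
        show ?G
        proof (cases "0 \<le> D w")
          case True
          then show ?G using caseB[OF y(1) wF Dy True yw] by simp
        next
          case False
          then have Dw: "D w < 0" by simp
          show ?G
          proof (cases "D w * E v - D v * E w = 0")
            case False
            then show ?G using caseB[OF wF vF Dw Dv] by simp
          next
            case wv0: True
            have h1: "D y * E v = D v * E y" and h2: "D w * E v = D v * E w" using yv0 wv0 by simp_all
            have "E v * (D y * E w - D w * E y) = E w * (D y * E v) - E y * (D w * E v)"
              by (simp add: algebra_simps)
            also have "\<dots> = E w * (D v * E y) - E y * (D v * E w)" by (simp only: h1 h2)
            also have "\<dots> = 0" by (simp add: algebra_simps)
            finally have Ev: "E v = 0" using yw by simp
            have "D v * (D y * E w - D w * E y) = D y * (D v * E w) - D w * (D v * E y)"
              by (simp add: algebra_simps)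
            also have "\<dots> = D y * (D w * E v) - D w * (D y * E v)" by (simp only: h1 h2)
            also have "\<dots> = 0" by (simp add: algebra_simps)
            finally have Dv0: "D v = 0" using yw by simp
            show ?G
            proof (cases "f0 = 0")
              case True
              then show ?G using caseA[OF vF Dv0 True Ev] by simp
            next
              case False
              then have "f0 < 0" using f0le by simp
              then show ?G using caseC[OF y(1) wF vF Dy yw Dv0 Ev] by simp
            qed
          qed
        qed
      qed
    qed
  qed
qed


end
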